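(* Let $f\in L^2(\rho_X)$ satisfy $\|f-\eta\|_{L^2(\rho_X)}\le\varepsilon$ for some $\varepsilon>0$. Then: (i) If $\eta$ satisfies the low-noise condition, i.e. there are $q>0$, $C>0$ with $\mathbb P(|\eta(X)|\le\delta)\le C\delta^q$ for all $\delta>0$, then for all $\delta>\varepsilon$ and $0<\nu<\delta$, \[\mathbb P(|f(X)|\le\nu)\le\frac{\varepsilon^2}{(\delta-\nu)^2}+C\delta^q.\] (ii) If $\eta$ satisfies the hard-margin condition $\mathbb P(|\eta(X)|>\delta)=1$ for some $\delta>0$, and $\varepsilon<\delta$, then for all $\nu<\delta$, \[\mathbb P(|f(X)|\le\nu)\le\frac{\varepsilon^2}{(\delta-\nu)^2}.\]
   Context: $\mathcal X=[0,1]^d$, $\rho$ is a probability distribution on $\mathcal X\times\{-1,1\}$ with $X$-marginal $\rho_X$, $(X,Y)\sim\rho$, and $\eta(x)=\mathbb E[Y\mid X=x]$. *)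

theory Defs
  imports "HOL-Probability.Probability"
begin

text \<open>The cube [0,1]^d, with d the (arbitrary, fixed) cardinality of the index type 'd.\<close>
definition unit_cube :: "(real ^ 'd) set" where
  "unit_cube = {x. \<forall>i. 0 \<le> x $ i \<and> x $ i \<le> 1}"

definition marginal_X :: "((real ^ 'd) \<times> real) measure \<Rightarrow> (real ^ 'd) measure" where
  "marginal_X \<rho> = distr \<rho> borel fst"

definition data_distribution :: "((real ^ 'd) \<times> real) measure \<Rightarrow> bool" where
  "data_distribution \<rho> \<longleftrightarrow> prob_space \<rho> \<and> sets \<rho> = sets (borel \<Otimes>\<^sub>M borel)
     \<and> measure \<rho> (unit_cube \<times> {-1, 1}) = 1"

text \<open>eta is (a version of) the regression function x |-> E[Y | X = x]:
  a Borel function with E[1_A(X) Y] = E[1_A(X) eta(X)] for every Borel set A.\<close>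
definition regression_function ::
    "((real ^ 'd) \<times> real) measure \<Rightarrow> ((real ^ 'd) \<Rightarrow> real) \<Rightarrow> bool" where
  "regression_function \<rho> \<eta> \<longleftrightarrow> \<eta> \<in> borel_measurable borel
     \<and> integrable (marginal_X \<rho>) \<eta>
     \<and> (\<forall>A \<in> sets borel.
          (\<integral>z. indicator A (fst z) * snd z \<partial>\<rho>) = (\<integral>x. indicator A x * \<eta> x \<partial>marginal_X \<rho>))"

definition L2_norm_X :: "((real ^ 'd) \<times> real) measure \<Rightarrow> ((real ^ 'd) \<Rightarrow> real) \<Rightarrow> real" where
  "L2_norm_X \<rho> g = sqrt (\<integral>x. (g x)\<^sup>2 \<partial>marginal_X \<rho>)"

end

theory Submission
  imports Defs
begin

lemma eta_bounded:
  fixes \<rho> :: "((real ^ 'd) \<times> real) measure"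
    and \<eta> :: "(real ^ 'd) \<Rightarrow> real"
  assumes rho: "data_distribution \<rho>"
    and eta: "regression_function \<rho> \<eta>"
  shows "AE x in marginal_X \<rho>. \<bar>\<eta> x\<bar> \<le> 1"
proof -
  interpret P: prob_space \<rho> using rho unfolding data_distribution_def by auto
  have sets: "sets \<rho> = sets (borel \<Otimes>\<^sub>M borel)" using rho unfolding data_distribution_def by auto
  have fstm: "fst \<in> measurable \<rho> borel"
    using measurable_fst[of "borel :: (real^'d) measure" "borel :: real measure"]
    by (simp add: measurable_cong_sets[OF sets refl])
  have sndm: "snd \<in> measurable \<rho> borel"
    using measurable_snd[of "borel :: (real^'d) measure" "borel :: real measure"]
    by (simp add: measurable_cong_sets[OF sets refl])
  have etam: "\<eta> \<in> borel_measurable borel" and etai: "integrable (marginal_X \<rho>) \<eta>"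
    and reg: "\<And>A. A \<in> sets borel \<Longrightarrow>
      (\<integral>z. indicator A (fst z) * snd z \<partial>\<rho>) = (\<integral>x. indicator A x * \<eta> x \<partial>marginal_X \<rho>)"
    using eta unfolding regression_function_def by auto
  interpret M: prob_space "marginal_X \<rho>" unfolding marginal_X_def
    by (rule P.prob_space_distr[OF fstm])
  have AEY: "AE z in \<rho>. \<bar>snd z\<bar> \<le> 1"
  proof -
    have "AE z in \<rho>. z \<in> unit_cube \<times> {-1, 1}"
      using rho unfolding data_distribution_def by (intro P.AE_prob_1) auto
    then show ?thesis by eventually_elim auto
  qed
  have intY: "integrable \<rho> (\<lambda>z. indicator A (fst z) * snd z)" if "A \<in> sets borel" for A
  proof -
    have i: "integrable \<rho> (\<lambda>_. 1::real)" by simp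
    have m: "(\<lambda>z. indicator A (fst z) * snd z) \<in> borel_measurable \<rho>"
      using that fstm sndm by measurable
    have a: "AE z in \<rho>. norm (indicator A (fst z) * snd z) \<le> norm (1::real)"
      using AEY by eventually_elim (auto simp: indicator_def)
    show ?thesis using Bochner_Integration.integrable_bound[OF i m a] .
  qed
  have intYI: "integrable \<rho> (\<lambda>z. indicator A (fst z) :: real)" if "A \<in> sets borel" for A
  proof -
    have i: "integrable \<rho> (\<lambda>_. 1::real)" by simp
    have m: "(\<lambda>z. indicator A (fst z) :: real) \<in> borel_measurable \<rho>"
      using that fstm by measurable
    have a: "AE z in \<rho>. norm (indicator A (fst z) :: real) \<le> norm (1::real)"
      by (simp add: indicator_def)
    show ?thesis using Bochner_Integration.integrable_bound[OF i m a] .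
  qed
  have mA: "measure (marginal_X \<rho>) A = (\<integral>z. indicator A (fst z) \<partial>\<rho>)" if "A \<in> sets borel" for A
  proof -
    have "measure (marginal_X \<rho>) A = (\<integral>x. indicator A x \<partial>marginal_X \<rho>)"
      by (simp add: marginal_X_def that)
    also have "\<dots> = (\<integral>z. indicator A (fst z) \<partial>\<rho>)"
      unfolding marginal_X_def by (rule integral_distr[OF fstm]) (use that in measurable)
    finally show ?thesis .
  qed
  have intX: "integrable (marginal_X \<rho>) (\<lambda>x. indicator A x * (\<eta> x - c))" if "A \<in> sets borel" for A c
  proof -
    have s: "A \<in> sets (marginal_X \<rho>)" using that by (simp add: marginal_X_def)
    have "integrable (marginal_X \<rho>) (\<lambda>x. \<eta> x - c)" using etai by simp
    from integrable_mult_indicator[OF s this] show ?thesis by simp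
  qed
  have intI: "integrable (marginal_X \<rho>) (\<lambda>x. indicator A x :: real)" if "A \<in> sets borel" for A
  proof -
    have s: "A \<in> sets (marginal_X \<rho>)" using that by (simp add: marginal_X_def)
    have sp: "space (marginal_X \<rho>) = UNIV" by (simp add: marginal_X_def)
    show ?thesis using s M.emeasure_finite[of A]
      by (simp add: integrable_indicator_iff sp) (simp add: M.emeasure_finite less_top[symmetric])
  qed
  have up: "AE x in marginal_X \<rho>. \<eta> x \<le> 1"
  proof -
    let ?A = "{x. \<eta> x > 1}"
    have A: "?A \<in> sets borel" using etam by measurable
    have "(\<integral>x. indicator ?A x * (\<eta> x - 1) \<partial>marginal_X \<rho>)
        = (\<integral>x. indicator ?A x * \<eta> x \<partial>marginal_X \<rho>) - (\<integral>x. indicator ?A x \<partial>marginal_X \<rho>)"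
      using Bochner_Integration.integral_diff[OF intX[OF A, of 0] intI[OF A]]
      by (simp add: right_diff_distrib)
    also have "(\<integral>x. indicator ?A x \<partial>marginal_X \<rho>) = measure (marginal_X \<rho>) ?A"
      using A by (simp add: marginal_X_def)
    also have "(\<integral>x. indicator ?A x * \<eta> x \<partial>marginal_X \<rho>) = (\<integral>z. indicator ?A (fst z) * snd z \<partial>\<rho>)"
      using reg[OF A] by simp
    also have "\<dots> \<le> (\<integral>z. indicator ?A (fst z) \<partial>\<rho>)"
    proof (rule integral_mono_AE)
      show "integrable \<rho> (\<lambda>z. indicator ?A (fst z) * snd z)" by (rule intY[OF A])
      show "integrable \<rho> (\<lambda>z. indicator ?A (fst z) :: real)" by (rule intYI[OF A])
      show "AE z in \<rho>. indicator ?A (fst z) * snd z \<le> indicator ?A (fst z)"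
        using AEY by eventually_elim (auto simp: indicator_def abs_le_iff)
    qed
    also have "\<dots> = measure (marginal_X \<rho>) ?A" using mA[OF A] by simp
    finally have le: "(\<integral>x. indicator ?A x * (\<eta> x - 1) \<partial>marginal_X \<rho>) \<le> 0" by simp
    have nn: "AE x in marginal_X \<rho>. 0 \<le> indicator ?A x * (\<eta> x - 1)"
      by (auto simp: indicator_def)
    have "(\<integral>x. indicator ?A x * (\<eta> x - 1) \<partial>marginal_X \<rho>) = 0"
      using le integral_nonneg_AE[OF nn] by linarith
    then have "AE x in marginal_X \<rho>. indicator ?A x * (\<eta> x - 1) = 0"
      using integral_nonneg_eq_0_iff_AE[OF intX[OF A] nn] by simp
    then show ?thesis by eventually_elim (auto simp: indicator_def split: if_splits)
  qed
  have lo: "AE x in marginal_X \<rho>. -1 \<le> \<eta> x"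
  proof -
    let ?A = "{x. \<eta> x < -1}"
    have A: "?A \<in> sets borel" using etam by measurable
    have intA: "integrable (marginal_X \<rho>) (\<lambda>x. indicator ?A x * (- 1 - \<eta> x))"
      using integrable_minus[OF intX[OF A, of "-1"]] by (simp add: algebra_simps)
    have "(\<integral>x. indicator ?A x * (- 1 - \<eta> x) \<partial>marginal_X \<rho>)
        = - (\<integral>x. indicator ?A x \<partial>marginal_X \<rho>) - (\<integral>x. indicator ?A x * \<eta> x \<partial>marginal_X \<rho>)"
      using Bochner_Integration.integral_diff[OF integrable_minus[OF intI[OF A]] intX[OF A, of 0]]
      by (simp add: right_diff_distrib)
    also have "(\<integral>x. indicator ?A x \<partial>marginal_X \<rho>) = measure (marginal_X \<rho>) ?A"
      using A by (simp add: marginal_X_def)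
    also have "(\<integral>x. indicator ?A x * \<eta> x \<partial>marginal_X \<rho>) = (\<integral>z. indicator ?A (fst z) * snd z \<partial>\<rho>)"
      using reg[OF A] by simp
    also have "(\<integral>z. indicator ?A (fst z) * snd z \<partial>\<rho>) \<ge> (\<integral>z. - indicator ?A (fst z) \<partial>\<rho>)"
    proof (rule integral_mono_AE)
      show "integrable \<rho> (\<lambda>z. indicator ?A (fst z) * snd z)" by (rule intY[OF A])
      show "integrable \<rho> (\<lambda>z. - indicator ?A (fst z) :: real)" using intYI[OF A] by simp
      show "AE z in \<rho>. - indicator ?A (fst z) \<le> indicator ?A (fst z) * snd z"
        using AEY by eventually_elim (auto simp: indicator_def abs_le_iff)
    qed
    moreover have "(\<integral>z. - indicator ?A (fst z) \<partial>\<rho>) = - measure (marginal_X \<rho>) ?A" using mA[OF A] by simp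
    ultimately have le: "(\<integral>x. indicator ?A x * (- 1 - \<eta> x) \<partial>marginal_X \<rho>) \<le> 0" by simp
    have nn: "AE x in marginal_X \<rho>. 0 \<le> indicator ?A x * (- 1 - \<eta> x)"
      by (auto simp: indicator_def)
    have "(\<integral>x. indicator ?A x * (- 1 - \<eta> x) \<partial>marginal_X \<rho>) = 0"
      using le integral_nonneg_AE[OF nn] by linarith
    then have "AE x in marginal_X \<rho>. indicator ?A x * (- 1 - \<eta> x) = 0"
      using integral_nonneg_eq_0_iff_AE[OF intA nn] by simp
    then show ?thesis by eventually_elim (auto simp: indicator_def split: if_splits)
  qed
  from up lo show ?thesis by eventually_elim auto
qed

theorem lemma8:
  fixes \<rho> :: "((real ^ 'd) \<times> real) measure"
    and \<eta> f :: "(real ^ 'd) \<Rightarrow> real"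
    and \<epsilon> :: real
  assumes rho: "data_distribution \<rho>"
    and eta: "regression_function \<rho> \<eta>"
    and f_meas: "f \<in> borel_measurable borel"
    and f_L2: "integrable (marginal_X \<rho>) (\<lambda>x. (f x)\<^sup>2)"
    and eps_pos: "\<epsilon> > 0"
    and close: "L2_norm_X \<rho> (\<lambda>x. f x - \<eta> x) \<le> \<epsilon>"
  shows "(\<forall>q C. q > 0 \<and> C > 0
            \<and> (\<forall>\<delta>>0. measure (marginal_X \<rho>) {x. \<bar>\<eta> x\<bar> \<le> \<delta>} \<le> C * \<delta> powr q)
          \<longrightarrow> (\<forall>\<delta> \<nu>. \<delta> > \<epsilon> \<and> 0 < \<nu> \<and> \<nu> < \<delta> \<longrightarrow>
                measure (marginal_X \<rho>) {x. \<bar>f x\<bar> \<le> \<nu>}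
                  \<le> \<epsilon>\<^sup>2 / (\<delta> - \<nu>)\<^sup>2 + C * \<delta> powr q))
       \<and> (\<forall>\<delta>. \<delta> > 0 \<and> measure (marginal_X \<rho>) {x. \<bar>\<eta> x\<bar> > \<delta>} = 1 \<and> \<epsilon> < \<delta>
          \<longrightarrow> (\<forall>\<nu>. \<nu> < \<delta> \<longrightarrow>
                measure (marginal_X \<rho>) {x. \<bar>f x\<bar> \<le> \<nu>} \<le> \<epsilon>\<^sup>2 / (\<delta> - \<nu>)\<^sup>2))"
proof -
  interpret P: prob_space \<rho> using rho unfolding data_distribution_def by auto
  have sets: "sets \<rho> = sets (borel \<Otimes>\<^sub>M borel)" using rho unfolding data_distribution_def by auto
  have fstm: "fst \<in> measurable \<rho> borel"
    using measurable_fst[of "borel :: (real^'d) measure" "borel :: real measure"]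
    by (simp add: measurable_cong_sets[OF sets refl])
  interpret M: prob_space "marginal_X \<rho>" unfolding marginal_X_def
    by (rule P.prob_space_distr[OF fstm])
  have sp: "space (marginal_X \<rho>) = UNIV" by (simp add: marginal_X_def)
  have ss: "sets (marginal_X \<rho>) = sets borel" by (simp add: marginal_X_def)
  have etam: "\<eta> \<in> borel_measurable borel"
    using eta unfolding regression_function_def by auto
  have etam': "\<eta> \<in> borel_measurable (marginal_X \<rho>)"
    using etam by (simp add: measurable_cong_sets[OF ss refl])
  have fm': "f \<in> borel_measurable (marginal_X \<rho>)"
    using f_meas by (simp add: measurable_cong_sets[OF ss refl])
  have AEeta: "AE x in marginal_X \<rho>. \<bar>\<eta> x\<bar> \<le> 1" by (rule eta_bounded[OF rho eta])
  have intg: "integrable (marginal_X \<rho>) (\<lambda>x. (f x - \<eta> x)\<^sup>2)"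
  proof -
    have i: "integrable (marginal_X \<rho>) (\<lambda>x. 2 * (f x)\<^sup>2 + 2)" using f_L2 by simp
    have m: "(\<lambda>x. (f x - \<eta> x)\<^sup>2) \<in> borel_measurable (marginal_X \<rho>)"
      using fm' etam' by measurable
    have a: "AE x in marginal_X \<rho>. norm ((f x - \<eta> x)\<^sup>2) \<le> norm (2 * (f x)\<^sup>2 + 2)"
      using AEeta
    proof eventually_elim
      case (elim x)
      have "(\<eta> x)\<^sup>2 \<le> 1" using elim by (metis abs_le_square_iff abs_one one_power2)
      moreover have "(f x - \<eta> x)\<^sup>2 \<le> 2 * (f x)\<^sup>2 + 2 * (\<eta> x)\<^sup>2"
        using sum_squares_ge_zero
        by (smt (verit) power2_diff zero_le_power2 power2_sum)
      ultimately show ?case by simp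
    qed
    show ?thesis using Bochner_Integration.integrable_bound[OF i m a] .
  qed
  have I2: "(\<integral>x. (f x - \<eta> x)\<^sup>2 \<partial>marginal_X \<rho>) \<le> \<epsilon>\<^sup>2"
  proof -
    let ?I = "(\<integral>x. (f x - \<eta> x)\<^sup>2 \<partial>marginal_X \<rho>)"
    have nn: "0 \<le> ?I" by (rule integral_nonneg_AE) simp
    have "sqrt ?I \<le> \<epsilon>" using close unfolding L2_norm_X_def .
    then have "(sqrt ?I)\<^sup>2 \<le> \<epsilon>\<^sup>2" by (intro power_mono) auto
    then show ?thesis using nn by simp
  qed
  have cheb: "measure (marginal_X \<rho>) {x. \<bar>f x - \<eta> x\<bar> \<ge> t} \<le> \<epsilon>\<^sup>2 / t\<^sup>2" if "t > 0" for t
  proof -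
    have gm: "(\<lambda>x. f x - \<eta> x) \<in> borel_measurable (marginal_X \<rho>)" using fm' etam' by measurable
    have "measure (marginal_X \<rho>) {x\<in>space (marginal_X \<rho>). \<bar>f x - \<eta> x\<bar> \<ge> t}
        \<le> (\<integral>x. (f x - \<eta> x)^2 \<partial>marginal_X \<rho>) / t\<^sup>2"
      by (rule M.second_moment_method[OF gm _ that]) (use intg in simp)
    also have "\<dots> \<le> \<epsilon>\<^sup>2 / t\<^sup>2" using I2 by (intro divide_right_mono) auto
    finally show ?thesis by (simp add: sp)
  qed
  have key: "measure (marginal_X \<rho>) {x. \<bar>f x\<bar> \<le> \<nu>}
      \<le> measure (marginal_X \<rho>) {x. \<bar>\<eta> x\<bar> \<le> \<delta>} + \<epsilon>\<^sup>2 / (\<delta> - \<nu>)\<^sup>2" if "\<nu> < \<delta>" for \<nu> \<delta>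
  proof -
    have s1: "{x. \<bar>\<eta> x\<bar> \<le> \<delta>} \<in> sets (marginal_X \<rho>)" unfolding ss using etam by measurable
    have s2: "{x. \<bar>f x - \<eta> x\<bar> \<ge> \<delta> - \<nu>} \<in> sets (marginal_X \<rho>)" unfolding ss using etam f_meas by measurable
    have sub: "{x. \<bar>f x\<bar> \<le> \<nu>} \<subseteq> {x. \<bar>\<eta> x\<bar> \<le> \<delta>} \<union> {x. \<bar>f x - \<eta> x\<bar> \<ge> \<delta> - \<nu>}"
      by auto
    have "measure (marginal_X \<rho>) {x. \<bar>f x\<bar> \<le> \<nu>}
        \<le> measure (marginal_X \<rho>) ({x. \<bar>\<eta> x\<bar> \<le> \<delta>} \<union> {x. \<bar>f x - \<eta> x\<bar> \<ge> \<delta> - \<nu>})"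
      by (rule M.finite_measure_mono[OF sub]) (use s1 s2 in auto)
    also have "\<dots> \<le> measure (marginal_X \<rho>) {x. \<bar>\<eta> x\<bar> \<le> \<delta>} + measure (marginal_X \<rho>) {x. \<bar>f x - \<eta> x\<bar> \<ge> \<delta> - \<nu>}"
      by (rule measure_Un_le) (use s1 s2 M.emeasure_finite in auto)
    also have "\<dots> \<le> measure (marginal_X \<rho>) {x. \<bar>\<eta> x\<bar> \<le> \<delta>} + \<epsilon>\<^sup>2 / (\<delta> - \<nu>)\<^sup>2"
      using cheb[of "\<delta> - \<nu>"] that by simp
    finally show ?thesis .
  qed
  show ?thesis
  proof (intro conjI allI impI)
    fix q C \<delta> \<nu> :: real
    assume h: "q > 0 \<and> C > 0 \<and> (\<forall>\<delta>>0. measure (marginal_X \<rho>) {x. \<bar>\<eta> x\<bar> \<le> \<delta>} \<le> C * \<delta> powr q)"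
      and d: "\<delta> > \<epsilon> \<and> 0 < \<nu> \<and> \<nu> < \<delta>"
    then have "measure (marginal_X \<rho>) {x. \<bar>\<eta> x\<bar> \<le> \<delta>} \<le> C * \<delta> powr q" using eps_pos by auto
    then show "measure (marginal_X \<rho>) {x. \<bar>f x\<bar> \<le> \<nu>} \<le> \<epsilon>\<^sup>2 / (\<delta> - \<nu>)\<^sup>2 + C * \<delta> powr q"
      using key[of \<nu> \<delta>] d by linarith
  next
    fix \<delta> \<nu> :: real
    assume h: "\<delta> > 0 \<and> measure (marginal_X \<rho>) {x. \<bar>\<eta> x\<bar> > \<delta>} = 1 \<and> \<epsilon> < \<delta>"
      and d: "\<nu> < \<delta>"
    have s: "{x. \<bar>\<eta> x\<bar> > \<delta>} \<in> sets (marginal_X \<rho>)" unfolding ss using etam by measurable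
    have eq: "{x. \<bar>\<eta> x\<bar> \<le> \<delta>} = space (marginal_X \<rho>) - {x. \<bar>\<eta> x\<bar> > \<delta>}" by (auto simp: sp)
    have "measure (marginal_X \<rho>) {x. \<bar>\<eta> x\<bar> \<le> \<delta>} = 0"
      unfolding eq using M.prob_compl[OF s] h by simp
    then show "measure (marginal_X \<rho>) {x. \<bar>f x\<bar> \<le> \<nu>} \<le> \<epsilon>\<^sup>2 / (\<delta> - \<nu>)\<^sup>2"
      using key[OF d] by simp
  qed
qed

end
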